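(* Let $q$ be a power of the prime $p$, let $\alpha_1(x),\dots,\alpha_d(x),\beta_1(x),\dots,\beta_d(x)\in{\mathbb F}_q[x]$, and define $a\in{\mathbb F}_q[x]^{{\mathbb N}}$ by $a(n)=\beta_1(x)\alpha_1(x)^n+\cdots+\beta_d(x)\alpha_d(x)^n$. Suppose $k\ge2$ is such that $\deg\alpha_i(x)\le k$ and $\deg\beta_i(x)\le(p-1)k$ for all $i$. Then $\operatorname{comp}_p({\mathcal Z}(a))\le q^{d^2k^4p^4}$.
   Context: ${\mathbb N}=\{0,1,2,\dots\}$, ${\mathcal Z}(a)=\{n\in{\mathbb N}\mid a(n)=0\}$. For integers $k\ge1$, $j\ge0$ let $L^k_j:{\mathbb N}\to{\mathbb N}$, $L^k_j(n)=kn+j$. For $S\subseteq{\mathbb N}$ let ${\mathcal V}_S=\{(L^{p^r}_i)^{-1}(S)\mid r\in{\mathbb N},\ 0\le i<p^r\}$ (a set of subsets of ${\mathbb N}$), and $\operatorname{comp}_p(S)=|{\mathcal V}_S|$, the $p$-complexity of $S$. *)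

theory Defs
  imports "HOL-Computational_Algebra.Polynomial"
begin

definition zero_set :: "(nat \<Rightarrow> 'b::zero) \<Rightarrow> nat set" where
  "zero_set a = {n. a n = 0}"

definition Lmap :: "nat \<Rightarrow> nat \<Rightarrow> nat \<Rightarrow> nat" where
  "Lmap k j n = k * n + j"

definition kernel_sets :: "nat \<Rightarrow> nat set \<Rightarrow> nat set set" where
  "kernel_sets p S = {Lmap (p ^ r) i -` S | r i. i < p ^ r}"

definition comp_p :: "nat \<Rightarrow> nat set \<Rightarrow> nat" where
  "comp_p p S = card (kernel_sets p S)"

end

theory Submission imports Defs "HOL-Library.Function_Algebras" "HOL-Library.FuncSet" "HOL-Computational_Algebra.Primes"
begin

definition Lam :: "nat \<Rightarrow> ('a::zero \<Rightarrow> 'a) \<Rightarrow> nat \<Rightarrow> 'a poly \<Rightarrow> 'a poly" where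
  "Lam p t s f = Poly (map (\<lambda>i. t (coeff f (p*i+s))) [0..<Suc (degree f)])"

lemma coeff_Lam:
  assumes "p > 0" "t 0 = 0"
  shows "coeff (Lam p t s f) i = t (coeff f (p*i+s))"
proof (cases "i < Suc (degree f)")
  case True
  then show ?thesis by (simp add: Lam_def nth_default_def del: upt_Suc)
next
  case False
  have "p*i+s > degree f" using False assms(1)
    by (metis add.commute less_Suc_eq_le mult_le_mono1 mult_1 not_le not_less0 less_le_trans nat_less_le trans_le_add2 One_nat_def Suc_leI)
  then show ?thesis using False assms by (simp add: Lam_def nth_default_def coeff_eq_0)
qed

locale frobinv =
  fixes p :: nat and t :: "'a::field \<Rightarrow> 'a"
  assumes p2: "p \<ge> 2"
    and t0: "t 0 = 0"
    and tadd: "\<And>x y. t (x + y) = t x + t y"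
    and tmult: "\<And>x y. t (x * y) = t x * t y"
    and tfrob: "\<And>x. t (x ^ p) = x"
    and tinj: "\<And>x. t x = 0 \<Longrightarrow> x = 0"
    and charp: "CHAR('a) = p"
    and primep: "prime p"
begin

lemma ppos: "p > 0" using p2 by simp

lemma cL: "coeff (Lam p t s f) i = t (coeff f (p*i+s))"
  by (simp add: coeff_Lam ppos t0)

lemma Lam_add: "Lam p t s (f + g) = Lam p t s f + Lam p t s g"
  by (rule poly_eqI) (simp add: cL tadd)

lemma Lam_0: "Lam p t s 0 = 0"
  by (rule poly_eqI) (simp add: cL t0)

lemma Lam_sum: "Lam p t s (sum f A) = (\<Sum>a\<in>A. Lam p t s (f a))"
  by (induction A rule: infinite_finite_induct) (simp_all add: Lam_0 Lam_add)

lemma Lam_smult: "Lam p t s (smult c f) = smult (t c) (Lam p t s f)"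
  by (rule poly_eqI) (simp add: cL tmult)

lemma Lam_shift: assumes "s < p" shows "Lam p t s (monom 1 p * f) = pCons 0 (Lam p t s f)"
proof (rule poly_eqI)
  fix n show "coeff (Lam p t s (monom 1 p * f)) n = coeff (pCons 0 (Lam p t s f)) n"
  proof (cases n)
    case 0 then show ?thesis using assms by (simp add: cL coeff_monom_mult t0)
  next
    case (Suc m)
    have "p * Suc m + s - p = p*m+s" by simp
    then show ?thesis using Suc by (simp add: cL coeff_monom_mult)
  qed
qed

lemma frob_poly: "(f + g :: 'a poly) ^ p = f ^ p + g ^ p"
  by (rule freshmans_dream) (simp_all add: charp primep)

lemma Lam_frob: assumes "s < p" shows "Lam p t s (g ^ p * h) = g * Lam p t s h"
proof (induction g arbitrary: h rule: pCons_induct)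
  case 0
  then show ?case using ppos by (simp add: Lam_0 zero_power)
next
  case (pCons a g)
  have "pCons a g = [:a:] + monom 1 1 * g" by (simp add: monom_Suc)
  then have "pCons a g ^ p = [:a:] ^ p + monom 1 1 ^ p * g ^ p"
    by (simp add: frob_poly power_mult_distrib)
  also have "\<dots> = [:a ^ p:] + monom 1 p * g ^ p"
  proof -
    have "[:a:]^n = [:a^n:]" for n by (induction n) auto
    then show ?thesis by (simp add: monom_power)
  qed
  finally have e: "pCons a g ^ p * h = smult (a^p) h + monom 1 p * (g^p * h)"
    by (simp add: algebra_simps)
  show ?case unfolding e Lam_add Lam_smult Lam_shift[OF assms] pCons.IH
    by (simp add: tfrob)
qed

lemma Lam_zero_iff: "(\<forall>s<p. Lam p t s f = 0) \<longleftrightarrow> f = 0"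
proof
  assume H: "\<forall>s<p. Lam p t s f = 0"
  show "f = 0"
  proof (rule poly_eqI)
    fix n
    have "coeff (Lam p t (n mod p) f) (n div p) = 0" using H ppos by simp
    then have "t (coeff f n) = 0" by (simp add: cL)
    then show "coeff f n = coeff 0 n" using tinj by simp
  qed
qed (simp add: Lam_0)

lemma Lam_degree: "degree (Lam p t s f) \<le> degree f div p"
proof (rule degree_le, intro allI impI)
  fix i assume "degree f div p < i"
  then have "degree f < p * i"
    using ppos by (metis div_less_iff_less_mult mult.commute)
  then show "coeff (Lam p t s f) i = 0" by (simp add: cL coeff_eq_0 t0)
qed

end

definition Phi :: "(nat \<Rightarrow> 'a::comm_ring_1 poly) \<Rightarrow> nat \<Rightarrow> (nat \<Rightarrow> 'a poly) \<Rightarrow> nat \<Rightarrow> 'a poly" where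
  "Phi al d g n = (\<Sum>j<d. g j * al j ^ n)"

definition Zs :: "(nat \<Rightarrow> 'a::comm_ring_1 poly) \<Rightarrow> nat \<Rightarrow> (nat \<Rightarrow> 'a poly) set \<Rightarrow> nat set" where
  "Zs al d G = {n. \<forall>g\<in>G. Phi al d g n = 0}"

definition Gam :: "nat \<Rightarrow> nat \<Rightarrow> (nat \<Rightarrow> 'a::zero poly) set" where
  "Gam d D = {g. (\<forall>j<d. degree (g j) \<le> D) \<and> (\<forall>j. d \<le> j \<longrightarrow> g j = 0)}"

context frobinv
begin

definition Gs :: "(nat \<Rightarrow> 'a poly) \<Rightarrow> nat \<Rightarrow> nat \<Rightarrow> (nat \<Rightarrow> 'a poly) set \<Rightarrow> (nat \<Rightarrow> 'a poly) set" where
  "Gs al d t0 G = {(\<lambda>j. if j < d then Lam p t s (g j * al j ^ t0) else 0) | g s. g \<in> G \<and> s < p}"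

lemma Lam_Phi:
  fixes al :: "nat \<Rightarrow> 'a poly"
  assumes "s < p"
  shows "Lam p t s (Phi al d g (p*n+t0)) = Phi al d (\<lambda>j. if j < d then Lam p t s (g j * al j ^ t0) else 0) n"
proof -
  have E: "Phi al d g (p*n+t0) = (\<Sum>j<d. (al j ^ n) ^ p * (g j * al j ^ t0))"
    unfolding Phi_def
  proof (intro sum.cong refl)
    fix j
    have "al j ^ (p*n+t0) = (al j ^ n)^p * al j ^ t0"
      by (simp only: power_add mult.commute[of p n] power_mult)
    then show "g j * al j ^ (p * n + t0) = (al j ^ n) ^ p * (g j * al j ^ t0)"
      by (simp only: ac_simps)
  qed
  have "Lam p t s (Phi al d g (p*n+t0)) = (\<Sum>j<d. Lam p t s ((al j ^ n) ^ p * (g j * al j ^ t0)))"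
    by (simp only: E Lam_sum)
  also have "\<dots> = (\<Sum>j<d. al j^n * Lam p t s (g j * al j ^ t0))" by (simp only: Lam_frob[OF assms])
  also have "\<dots> = Phi al d (\<lambda>j. if j < d then Lam p t s (g j * al j ^ t0) else 0) n"
    unfolding Phi_def by (intro sum.cong refl) (simp add: mult.commute)
  finally show ?thesis .
qed

lemma step:
  fixes al :: "nat \<Rightarrow> 'a poly"
  assumes "t0 < p"
  shows "Lmap p t0 -` Zs al d G = Zs al d (Gs al d t0 G)"
proof -
  have "Phi al d g (p*n+t0) = 0 \<longleftrightarrow>
     (\<forall>s<p. Phi al d (\<lambda>j. if j < d then Lam p t s (g j * al j ^ t0) else 0) n = 0)" for g n
  proof -
    have A: "(Phi al d g (p*n+t0) = 0) = (\<forall>s<p. Lam p t s (Phi al d g (p*n+t0)) = 0)"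
      by (rule Lam_zero_iff[symmetric])
    show ?thesis unfolding A by (simp add: Lam_Phi)
  qed
  then have B: "(\<forall>g\<in>G. Phi al d g (p*n+t0) = 0) \<longleftrightarrow>
     (\<forall>g\<in>G. \<forall>s<p. Phi al d (\<lambda>j. if j < d then Lam p t s (g j * al j ^ t0) else 0) n = 0)" for n
    by simp
  show ?thesis
  proof (rule set_eqI)
    fix n
    have "n \<in> Lmap p t0 -` Zs al d G \<longleftrightarrow> (\<forall>g\<in>G. Phi al d g (p*n+t0) = 0)"
      by (simp add: Zs_def Lmap_def)
    also have "\<dots> \<longleftrightarrow> (\<forall>g\<in>G. \<forall>s<p. Phi al d (\<lambda>j. if j < d then Lam p t s (g j * al j ^ t0) else 0) n = 0)"
      by (rule B)
    also have "\<dots> \<longleftrightarrow> n \<in> Zs al d (Gs al d t0 G)"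
      unfolding Zs_def Gs_def by blast
    finally show "n \<in> Lmap p t0 -` Zs al d G \<longleftrightarrow> n \<in> Zs al d (Gs al d t0 G)" .
  qed
qed

lemma Gs_Gam:
  fixes al :: "nat \<Rightarrow> 'a poly"
  assumes "t0 < p" "G \<subseteq> Gam d ((p-1)*k)" "\<And>j. j < d \<Longrightarrow> degree (al j) \<le> k"
  shows "Gs al d t0 G \<subseteq> Gam d ((p-1)*k)"
proof
  fix h assume "h \<in> Gs al d t0 G"
  then obtain g s where h: "h = (\<lambda>j. if j < d then Lam p t s (g j * al j ^ t0) else 0)"
    and g: "g \<in> G" and s: "s < p" unfolding Gs_def by blast
  have "degree (h j) \<le> (p-1)*k" if j: "j < d" for j
  proof -
    have "degree (g j * al j ^ t0) \<le> degree (g j) + degree (al j ^ t0)"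
      by (rule degree_mult_le)
    also have "\<dots> \<le> degree (g j) + t0 * degree (al j)"
      using degree_power_le[of "al j" t0] by (simp add: mult.commute)
    also have "\<dots> \<le> (p-1)*k + (p-1)*k"
    proof (rule add_le_mono)
      show "degree (g j) \<le> (p-1)*k" using g assms(2) j unfolding Gam_def by blast
      have "t0 \<le> p - 1" "degree (al j) \<le> k" using assms(1) assms(3)[OF j] by auto
      then show "t0 * degree (al j) \<le> (p-1)*k" by (rule mult_le_mono)
    qed
    also have "\<dots> = 2*((p-1)*k)" by simp
    also have "\<dots> \<le> p*((p-1)*k)" using p2 by (intro mult_le_mono1)
    finally have "degree (g j * al j ^ t0) div p \<le> (p*((p-1)*k)) div p"
      by (rule div_le_mono)
    also have "\<dots> = (p-1)*k" using ppos by simp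
    finally have "degree (g j * al j ^ t0) div p \<le> (p-1)*k" .
    moreover have "h j = Lam p t s (g j * al j ^ t0)" using h j by simp
    ultimately show ?thesis using Lam_degree order_trans by metis
  qed
  moreover have "h j = 0" if "d \<le> j" for j using h that by simp
  ultimately show "h \<in> Gam d ((p-1)*k)" unfolding Gam_def by blast
qed

lemma kernel_step:
  fixes al :: "nat \<Rightarrow> 'a poly"
  assumes "\<And>j. j < d \<Longrightarrow> degree (al j) \<le> k"
  shows "G \<subseteq> Gam d ((p-1)*k) \<Longrightarrow> i < p^r \<Longrightarrow>
     \<exists>G'. G' \<subseteq> Gam d ((p-1)*k) \<and> Lmap (p^r) i -` Zs al d G = Zs al d G'"
proof (induction r arbitrary: G i)
  case 0
  then have "i = 0" by simp
  then have "Lmap (p^0) i = id" by (auto simp: Lmap_def)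
  then have "Lmap (p^0) i -` Zs al d G = Zs al d G" by simp
  then show ?case using "0.prems"(1) by blast
next
  case (Suc r)
  define i0 where "i0 = i mod p"
  define i1 where "i1 = i div p"
  have i0: "i0 < p" using ppos i0_def by simp
  have i1: "i1 < p^r" using Suc.prems(2) ppos unfolding i1_def
    by (simp add: less_mult_imp_div_less mult.commute)
  have eq: "Lmap (p^Suc r) i = Lmap p i0 \<circ> Lmap (p^r) i1"
  proof (rule ext)
    fix n
    have "p ^ Suc r * n + i = (p * (p ^ r * n + i div p) + i mod p)"
      using div_mult_mod_eq[of i p] by (simp add: algebra_simps)
    then show "Lmap (p^Suc r) i n = (Lmap p i0 \<circ> Lmap (p^r) i1) n"
      unfolding Lmap_def i0_def i1_def by simp
  qed
  have "Lmap (p^Suc r) i -` Zs al d G = Lmap (p^r) i1 -` (Lmap p i0 -` Zs al d G)"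
    by (simp only: eq vimage_comp)
  also have "\<dots> = Lmap (p^r) i1 -` Zs al d (Gs al d i0 G)" using step[OF i0] by simp
  finally have e2: "Lmap (p^Suc r) i -` Zs al d G = Lmap (p^r) i1 -` Zs al d (Gs al d i0 G)" .
  have "\<exists>G'. G' \<subseteq> Gam d ((p-1)*k) \<and> Lmap (p^r) i1 -` Zs al d (Gs al d i0 G) = Zs al d G'"
    by (rule Suc.IH[OF Gs_Gam[OF i0 Suc.prems(1) assms] i1])
  then obtain G' where G': "G' \<subseteq> Gam d ((p-1)*k)" "Lmap (p^r) i1 -` Zs al d (Gs al d i0 G) = Zs al d G'"
    by (elim exE conjE)
  show ?case by (rule exI[of _ G']) (simp only: G' e2 simp_thms)
qed

end

definition sc :: "'a::field \<Rightarrow> (nat \<Rightarrow> 'a poly) \<Rightarrow> (nat \<Rightarrow> 'a poly)" where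
  "sc c g = (\<lambda>j. smult c (g j))"

interpretation VS: vector_space "sc :: 'a::field \<Rightarrow> _"
  by unfold_locales (simp_all add: sc_def fun_eq_iff smult_add_right smult_add_left)

lemma sum_fun_apply: "(sum f A) x = (\<Sum>a\<in>A. f a x)"
  by (induction A rule: infinite_finite_induct) simp_all

lemma Phi_add: "Phi al d (g + h) n = Phi al d g n + Phi al d h n"
  by (simp add: Phi_def algebra_simps sum.distrib)

lemma smult_sum_right: "smult c (sum f A) = (\<Sum>a\<in>A. smult c (f a))"
  by (induction A rule: infinite_finite_induct) (simp_all add: smult_add_right)

lemma Phi_sc: "Phi al d (sc c g) n = smult c (Phi al d g n)"
  by (simp add: Phi_def sc_def smult_sum_right)

lemma Phi_zero: "Phi al d 0 n = 0"
  by (simp add: Phi_def)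

lemma Zs_span:
  fixes al :: "nat \<Rightarrow> 'a::field poly"
  assumes "G \<subseteq> VS.span B"
  shows "Zs al d B \<subseteq> Zs al d G"
proof
  fix n assume n: "n \<in> Zs al d B"
  have sub: "VS.subspace {x. Phi al d x n = 0}"
    by (rule VS.subspaceI) (simp_all add: Phi_add Phi_sc Phi_zero)
  have "Phi al d g n = 0" if "g \<in> G" for g
  proof -
    have "g \<in> VS.span B" using assms that by blast
    then show ?thesis
      by (rule VS.span_induct[where P = "\<lambda>x. Phi al d x n = 0"]) (use sub n in \<open>auto simp: Zs_def\<close>)
  qed
  then show "n \<in> Zs al d G" by (simp add: Zs_def)
qed

definition Eb :: "nat \<Rightarrow> nat \<Rightarrow> (nat \<Rightarrow> 'a::zero_neq_one poly) set" where
  "Eb d D = (\<lambda>x. (\<lambda>i. if i = fst x then monom 1 (snd x) else 0)) ` ({..<d} \<times> {..D})"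

lemma Gam_span:
  fixes g :: "nat \<Rightarrow> 'a::field poly"
  assumes "g \<in> Gam d D"
  shows "g \<in> VS.span (Eb d D)"
proof -
  let ?E = "\<lambda>j e. (\<lambda>i. if i = j then monom (1::'a) e else 0)"
  have eq: "g = (\<Sum>j<d. \<Sum>e\<le>D. sc (coeff (g j) e) (?E j e))"
  proof (rule ext)
    fix i
    have "(\<Sum>j<d. \<Sum>e\<le>D. sc (coeff (g j) e) (?E j e)) i
        = (\<Sum>j<d. \<Sum>e\<le>D. if i = j then monom (coeff (g j) e) e else 0)"
      unfolding sum_fun_apply sc_def by (intro sum.cong refl) (auto simp: smult_monom)
    also have "\<dots> = (\<Sum>j<d. if i = j then (\<Sum>e\<le>D. monom (coeff (g j) e) e) else 0)"
      by (intro sum.cong refl) simp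
    also have "\<dots> = (if i < d then (\<Sum>e\<le>D. monom (coeff (g i) e) e) else 0)"
      by (simp add: sum.delta)
    also have "\<dots> = g i"
    proof (cases "i < d")
      case True
      then have "degree (g i) \<le> D" using assms by (simp add: Gam_def)
      then show ?thesis using True by (simp add: poly_as_sum_of_monoms')
    next
      case False
      then show ?thesis using assms by (simp add: Gam_def)
    qed
    finally show "g i = (\<Sum>j<d. \<Sum>e\<le>D. sc (coeff (g j) e) (?E j e)) i" by simp
  qed
  have "?E j e \<in> Eb d D" if "j < d" "e \<le> D" for j e
    unfolding Eb_def using that by (intro image_eqI[of _ _ "(j,e)"]) auto
  then have "(\<Sum>j<d. \<Sum>e\<le>D. sc (coeff (g j) e) (?E j e)) \<in> VS.span (Eb d D)"
    by (intro VS.span_sum VS.span_scale VS.span_base) auto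
  then show ?thesis using eq by simp
qed

lemma card_Eb: "finite (Eb d D) \<and> card (Eb d D) \<le> d * (D+1)"
  unfolding Eb_def using card_image_le[of "{..<d} \<times> {..D}"] by (simp add: card_cartesian_product)

lemma Gam_card:
  assumes "finite (UNIV :: 'a set)"
  shows "finite (Gam d D :: (nat \<Rightarrow> 'a::zero poly) set) \<and> card (Gam d D :: (nat \<Rightarrow> 'a poly) set) \<le> card (UNIV :: 'a set) ^ (d * (D+1))"
proof -
  define phi :: "(nat \<Rightarrow> 'a poly) \<Rightarrow> (nat \<times> nat \<Rightarrow> 'a)" where
    "phi g = restrict (\<lambda>x. coeff (g (fst x)) (snd x)) ({..<d} \<times> {..D})" for g
  let ?P = "PiE ({..<d} \<times> {..D}) (\<lambda>_. (UNIV :: 'a set))"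
  have inj: "inj_on phi (Gam d D)"
  proof (rule inj_onI)
    fix g h assume g: "g \<in> Gam d D" and h: "h \<in> Gam d D" and e: "phi g = phi h"
    show "g = h"
    proof (rule ext)
      fix j
      show "g j = h j"
      proof (cases "j < d")
        case True
        show ?thesis
        proof (rule poly_eqI)
          fix m
          show "coeff (g j) m = coeff (h j) m"
          proof (cases "m \<le> D")
            case True
            then show ?thesis using fun_cong[OF e, of "(j,m)"] \<open>j < d\<close> by (simp add: phi_def restrict_def)
          next
            case False
            then have "degree (g j) < m" "degree (h j) < m" using g h True by (auto simp: Gam_def)
            then show ?thesis by (simp add: coeff_eq_0)
          qed
        qed
      next
        case False
        then show ?thesis using g h by (simp add: Gam_def)
      qed
    qed
  qed
  have sub: "phi ` Gam d D \<subseteq> ?P" unfolding phi_def by (intro image_subsetI) (simp only: restrict_PiE_iff UNIV_I ball_simps Ball_def simp_thms)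
  have fin: "finite ?P" using assms by (intro finite_PiE) auto
  have "card ?P = card (UNIV :: 'a set) ^ (d * (D+1))"
    by (simp add: card_PiE card_cartesian_product)
  moreover have "card (Gam d D :: (nat \<Rightarrow> 'a poly) set) \<le> card ?P" by (rule card_inj_on_le[OF inj sub fin])
  moreover have "finite (Gam d D :: (nat \<Rightarrow> 'a poly) set)" using inj sub fin finite_imageD finite_subset by metis
  ultimately show ?thesis by simp
qed


lemma frob_exists:
  assumes "prime p" "CHAR('a::{field,finite}) = p"
  shows "\<exists>t::'a \<Rightarrow> 'a. frobinv p t"
proof -
  define F where "F = (\<lambda>x::'a. x ^ p)"
  have p0: "p > 0" using assms(1) prime_gt_0_nat by blast
  have fd: "(x + y) ^ p = x ^ p + y ^ p" for x y :: 'a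
    by (rule freshmans_dream) (simp_all add: assms)
  have "inj F"
  proof (rule injI)
    fix x y assume "F x = F y"
    then have xy: "x ^ p = y ^ p" by (simp add: F_def)
    have "(x - y) ^ p + y ^ p = x ^ p" using fd[of "x - y" y] by simp
    then have "(x - y) ^ p = 0" using xy by simp
    then show "x = y" by simp
  qed
  moreover then have "surj F" by (simp add: finite_UNIV_inj_surj)
  define t where "t = inv F"
  have Ft: "F (t y) = y" for y unfolding t_def using \<open>surj F\<close> by (simp add: surj_f_inv_f)
  have tF: "t (F x) = x" for x unfolding t_def using \<open>inj F\<close> by (simp add: inv_f_f)
  have "frobinv p t"
  proof
    show "p \<ge> 2" using assms(1) prime_ge_2_nat by blast
    show "t 0 = 0" using tF[of 0] p0 by (simp add: F_def zero_power)
    show "t (x + y) = t x + t y" for x y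
      using tF[of "t x + t y"] Ft[of x] Ft[of y] fd[of "t x" "t y"] by (simp add: F_def)
    show "t (x * y) = t x * t y" for x y
      using tF[of "t x * t y"] Ft[of x] Ft[of y] by (simp add: F_def power_mult_distrib)
    show "t (x ^ p) = x" for x using tF[of x] by (simp add: F_def)
    show "x = 0" if "t x = 0" for x using Ft[of x] that p0 by (simp add: F_def zero_power)
    show "CHAR('a) = p" by (rule assms(2))
    show "prime p" by (rule assms(1))
  qed
  then show ?thesis by blast
qed

lemma expo:
  fixes p k d :: nat
  assumes "p \<ge> 2" "k \<ge> 2"
  shows "(d*((p-1)*k+1)+1) * (d*((p-1)*k+1)) \<le> d^2*k^4*p^4"
proof (cases "d = 0")
  case True then show ?thesis by simp
next
  case False
  define M where "M = d*p*k"
  have a: "(p-1)*k+1 \<le> p*k"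
  proof -
    have "(p-1)*k + 1 \<le> (p-1)*k + k" using assms by simp
    also have "\<dots> = p*k" using assms by (simp add: algebra_simps)
    finally show ?thesis .
  qed
  have N: "d*((p-1)*k+1) \<le> M" unfolding M_def using mult_le_mono2[OF a, of d] by (simp add: mult.assoc)
  have M1: "M \<ge> 1" unfolding M_def using False assms by simp
  have "(d*((p-1)*k+1)+1) * (d*((p-1)*k+1)) \<le> (2*M) * M"
    using N M1 by (intro mult_le_mono) auto
  also have "\<dots> = 2 * (d^2*p^2*k^2)" by (simp add: M_def power2_eq_square)
  also have "\<dots> \<le> (p^2*k^2) * (d^2*p^2*k^2)"
  proof (rule mult_le_mono1)
    have "4 \<le> p^2" using power_mono[OF assms(1), of 2] by simp
    moreover have "1 \<le> k^2" using assms by simp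
    ultimately have "4 * 1 \<le> p^2 * k^2" by (rule mult_le_mono)
    then show "2 \<le> p^2*k^2" by simp
  qed
  also have "\<dots> = d^2*k^4*p^4" by (simp add: power_mult_distrib power2_eq_square power4_eq_xxxx ac_simps)
  finally show ?thesis .
qed

theorem proposition6p5:
  fixes alpha beta :: "nat \<Rightarrow> 'a::{field,finite} poly"
    and p d k :: nat
  assumes "prime p" and "CHAR('a) = p"
    and "k \<ge> 2"
    and "\<And>i. i < d \<Longrightarrow> degree (alpha i) \<le> k"
    and "\<And>i. i < d \<Longrightarrow> degree (beta i) \<le> (p - 1) * k"
  shows "finite (kernel_sets p (zero_set (\<lambda>n. \<Sum>i<d. beta i * alpha i ^ n)))
    \<and> comp_p p (zero_set (\<lambda>n. \<Sum>i<d. beta i * alpha i ^ n))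
        \<le> card (UNIV :: 'a set) ^ (d^2 * k^4 * p^4)"
proof -
  obtain t :: "'a \<Rightarrow> 'a" where fi: "frobinv p t" using frob_exists[OF assms(1,2)] by blast
  define D where "D = (p-1)*k"
  define N where "N = d*(D+1)"
  define Gm where "Gm = (Gam d D :: (nat \<Rightarrow> 'a poly) set)"
  define q where "q = card (UNIV :: 'a set)"
  define b' where "b' = (\<lambda>j. if j < d then beta j else 0)"
  define S where "S = zero_set (\<lambda>n. \<Sum>i<d. beta i * alpha i ^ n)"
  have b'G: "b' \<in> Gm" unfolding Gm_def Gam_def b'_def D_def using assms(5) by auto
  have SZ: "S = Zs alpha d {b'}"
    unfolding S_def zero_set_def Zs_def Phi_def b'_def by simp
  have GmC: "finite Gm \<and> card Gm \<le> q ^ N"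
    unfolding Gm_def q_def N_def by (rule Gam_card) simp
  have EbC: "finite (Eb d D :: (nat \<Rightarrow> 'a poly) set) \<and> card (Eb d D :: (nat \<Rightarrow> 'a poly) set) \<le> N"
    unfolding N_def by (rule card_Eb)
  define P where "P = PiE {..<N} (\<lambda>_. insert None (Some ` Gm))"
  define Psi where "Psi f = Zs alpha d (Some -` (f ` {..<N}))" for f :: "nat \<Rightarrow> (nat \<Rightarrow> 'a poly) option"
  have K: "kernel_sets p S \<subseteq> Psi ` P"
  proof
    fix X assume "X \<in> kernel_sets p S"
    then obtain r i where X: "X = Lmap (p^r) i -` S" and i: "i < p^r" unfolding kernel_sets_def by blast
    obtain G where G: "G \<subseteq> Gm" "X = Zs alpha d G"
      using frobinv.kernel_step[OF fi, of d alpha k "{b'}" i r] assms(4) b'G i X SZ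
      unfolding Gm_def D_def by blast
    obtain B where B: "B \<subseteq> G" "VS.independent B" "G \<subseteq> VS.span B"
      using VS.maximal_independent_subset[of G] by blast
    have "B \<subseteq> VS.span (Eb d D)" using B(1) G(1) Gam_span unfolding Gm_def by blast
    then have Bf: "finite B \<and> card B \<le> N"
      using VS.independent_span_bound[of "Eb d D" B] EbC B(2) by auto
    have XB: "X = Zs alpha d B"
    proof
      show "Zs alpha d B \<subseteq> X" using Zs_span[OF B(3)] G(2) by simp
      show "X \<subseteq> Zs alpha d B" using G(2) B(1) unfolding Zs_def by blast
    qed
    obtain h where h: "bij_betw h {0..<card B} B" using ex_bij_betw_nat_finite Bf by blast
    define f where "f = restrict (\<lambda>j. if j < card B then Some (h j) else None) {..<N}"
    have fP: "f \<in> P"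
      unfolding P_def f_def
    proof (subst restrict_PiE_iff, intro ballI)
      fix j assume "j \<in> {..<N}"
      show "(if j < card B then Some (h j) else None) \<in> insert None (Some ` Gm)"
      proof (cases "j < card B")
        case True
        then have "h j \<in> B" using h bij_betwE by fastforce
        then show ?thesis using True B(1) G(1) by auto
      qed simp
    qed
    have "Some -` (f ` {..<N}) = B"
    proof
      show "Some -` (f ` {..<N}) \<subseteq> B"
      proof
        fix x assume "x \<in> Some -` (f ` {..<N})"
        then obtain j where j: "j < N" "f j = Some x" by auto
        then have "j < card B" "h j = x" unfolding f_def by (auto split: if_splits)
        then show "x \<in> B" using h bij_betwE by fastforce
      qed
      show "B \<subseteq> Some -` (f ` {..<N})"
      proof
        fix x assume "x \<in> B"
        then have "x \<in> h ` {0..<card B}" using h bij_betw_imp_surj_on by metis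
        then obtain j where j: "j < card B" "h j = x" by auto
        then have "j < N" using Bf by simp
        then have "f j = Some x" unfolding f_def using j by simp
        then show "x \<in> Some -` (f ` {..<N})" using \<open>j < N\<close> by force
      qed
    qed
    then have "X = Psi f" unfolding Psi_def using XB by simp
    then show "X \<in> Psi ` P" using fP by blast
  qed
  have finP: "finite P" unfolding P_def using GmC by (intro finite_PiE) auto
  have cardI: "card (insert None (Some ` Gm)) = card Gm + 1"
    using GmC by (simp add: card_image)
  have cardP: "card P = (card Gm + 1) ^ N"
    unfolding P_def by (simp add: card_PiE cardI)
  have q2: "q \<ge> 2"
  proof -
    have "card {0::'a, 1} \<le> q" unfolding q_def by (rule card_mono) auto
    then show ?thesis by simp
  qed
  have fin: "finite (kernel_sets p S)" using K finP finite_subset by blast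
  have "card (kernel_sets p S) \<le> card (Psi ` P)" using K finP by (intro card_mono) auto
  also have "\<dots> \<le> card P" by (rule card_image_le[OF finP])
  also have "\<dots> = (card Gm + 1) ^ N" by (rule cardP)
  also have "\<dots> \<le> (q ^ N + 1) ^ N" using GmC by (intro power_mono) auto
  also have "\<dots> \<le> (q ^ (N+1)) ^ N"
  proof (intro power_mono)
    have "1 \<le> q ^ N" using q2 by simp
    then have "q ^ N + 1 \<le> 2 * q ^ N" by simp
    also have "\<dots> \<le> q * q ^ N" using q2 by (intro mult_le_mono1)
    finally show "q ^ N + 1 \<le> q ^ (N+1)" by simp
  qed simp
  also have "\<dots> = q ^ ((N+1)*N)" by (simp only: power_mult)
  also have "\<dots> \<le> q ^ (d^2 * k^4 * p^4)"
  proof (rule power_increasing)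
    have "p \<ge> 2" using assms(1) prime_ge_2_nat by blast
    then show "(N+1)*N \<le> d^2 * k^4 * p^4" unfolding N_def D_def using expo assms(3) by blast
  qed (use q2 in simp)
  finally show ?thesis using fin unfolding comp_p_def S_def q_def by simp
qed

end
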